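(* Let $m\ge 1$ and let $\vec f=(f_1,\dots,f_m)\in\mathbb{R}^m$ have pairwise distinct components. Define the Gibbs weights $w_\alpha:=e^{f_\alpha}/\sum_{\beta=1}^m e^{f_\beta}$, $\alpha=1,\dots,m$. Let $\delta\vec f=(\delta f_1,\dots,\delta f_m)\in\mathbb{R}^m$ be arbitrary, and regard $\vec f$ and $\delta\vec f$ as a pair of random variables with joint probability $w(f_\alpha,\delta f_\beta)=\delta_{\alpha\beta}w_\alpha$ (i.e. the index $\alpha$ is drawn with probability $w_\alpha$ and both variables take their $\alpha$-th value). Call them totally uncorrelated if for all natural numbers $u,v$ $$\sum_{\alpha=1}^m w_\alpha f_\alpha^{u}(\delta f_\alpha)^{v}-\Big(\sum_{\alpha=1}^m w_\alpha f_\alpha^{u}\Big)\Big(\sum_{\alpha=1}^m w_\alpha (\delta f_\alpha)^{v}\Big)=0.$$ Then $\vec f$ and $\delta\vec f$ are totally uncorrelated if and only if $\delta\vec f$ is proportional to $(1,\dots,1)$.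
   Context: Here $\delta_{\alpha\beta}$ is the Kronecker delta. The vector $\vec f$ represents the values $f_\alpha(\boldsymbol{x})$ of the functions defining a statistical hypersurface $x_{n+1}=\ln\sum_\alpha e^{f_\alpha(\boldsymbol{x})}$ at a point, and $\delta\vec f$ an infinitesimal variation of these values; only the finite-dimensional statement above is needed. *)

theory Defs
  imports "HOL-Analysis.Analysis"
begin

definition gibbs_weight :: "real ^ 'm \<Rightarrow> 'm \<Rightarrow> real" where
  "gibbs_weight f a = exp (f $ a) / (\<Sum>b\<in>UNIV. exp (f $ b))"

definition totally_uncorrelated :: "real ^ 'm \<Rightarrow> real ^ 'm \<Rightarrow> bool" where
  "totally_uncorrelated f df \<longleftrightarrow>
     (\<forall>u v :: nat.
        (\<Sum>a\<in>UNIV. gibbs_weight f a * (f $ a) ^ u * (df $ a) ^ v)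
        - (\<Sum>a\<in>UNIV. gibbs_weight f a * (f $ a) ^ u)
          * (\<Sum>a\<in>UNIV. gibbs_weight f a * (df $ a) ^ v) = 0)"

end

theory Submission
  imports Defs
begin

lemma gw_pos: "gibbs_weight f a > 0"
proof -
  have "(\<Sum>b\<in>UNIV. exp (f $ b)) > 0"
    by (rule sum_pos) auto
  then show ?thesis unfolding gibbs_weight_def by simp
qed

lemma gw_sum: "(\<Sum>a\<in>UNIV. gibbs_weight f a) = 1"
proof -
  have "(\<Sum>b\<in>UNIV. exp (f $ b)) > 0"
    by (rule sum_pos) auto
  then show ?thesis unfolding gibbs_weight_def
    by (simp add: sum_divide_distrib[symmetric])
qed

theorem proposition3p1:
  fixes f df :: "real ^ 'm"
  assumes "inj (\<lambda>a. f $ a)"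
  shows "totally_uncorrelated f df \<longleftrightarrow> (\<exists>c::real. \<forall>a. df $ a = c)"
proof
  assume "\<exists>c::real. \<forall>a. df $ a = c"
  then obtain c where c: "\<And>a. df $ a = c" by blast
  show "totally_uncorrelated f df"
    unfolding totally_uncorrelated_def
  proof (intro allI)
    fix u v :: nat
    have "(\<Sum>a\<in>UNIV. gibbs_weight f a * (df $ a) ^ v) = c ^ v"
      using gw_sum[of f] by (simp add: c sum_distrib_right[symmetric])
    then show "(\<Sum>a\<in>UNIV. gibbs_weight f a * (f $ a) ^ u * (df $ a) ^ v)
        - (\<Sum>a\<in>UNIV. gibbs_weight f a * (f $ a) ^ u)
          * (\<Sum>a\<in>UNIV. gibbs_weight f a * (df $ a) ^ v) = 0"
      by (simp add: c sum_distrib_right)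
  qed
next
  assume tu: "totally_uncorrelated f df"
  define w where "w = gibbs_weight f"
  define E where "E = (\<Sum>a\<in>UNIV. w a * df $ a)"
  have S: "(\<Sum>a\<in>UNIV. w a * (f $ a) ^ i * (df $ a - E)) = 0" for i
  proof -
    have h: "(\<Sum>a\<in>UNIV. w a * (f $ a) ^ i * (df $ a) ^ 1) - (\<Sum>a\<in>UNIV. w a * (f $ a) ^ i) * (\<Sum>a\<in>UNIV. w a * (df $ a) ^ 1) = 0"
      using tu unfolding totally_uncorrelated_def w_def by blast
    have "(\<Sum>a\<in>UNIV. w a * (f $ a) ^ i * (df $ a - E))
        = (\<Sum>a\<in>UNIV. w a * (f $ a) ^ i * df $ a) - (\<Sum>a\<in>UNIV. w a * (f $ a) ^ i) * E"
      by (simp only: right_diff_distrib sum_subtractf sum_distrib_right)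
    also have "\<dots> = 0" using h unfolding E_def by simp
    finally show ?thesis .
  qed
  have step: "(\<Sum>a\<in>UNIV. w a * (f $ a) ^ i * ((f $ a - c) * g (f $ a)) * (df $ a - E)) = 0"
    if "\<And>i. (\<Sum>a\<in>UNIV. w a * (f $ a) ^ i * g (f $ a) * (df $ a - E)) = 0" for g c i
  proof -
    have "(\<Sum>a\<in>UNIV. w a * (f $ a) ^ i * ((f $ a - c) * g (f $ a)) * (df $ a - E))
       = (\<Sum>a\<in>UNIV. w a * (f $ a) ^ Suc i * g (f $ a) * (df $ a - E))
         - c * (\<Sum>a\<in>UNIV. w a * (f $ a) ^ i * g (f $ a) * (df $ a - E))"
      by (simp add: sum_distrib_left sum_subtractf[symmetric] algebra_simps)
    then show ?thesis using that[of i] that[of "Suc i"] by (simp only: diff_zero mult_zero_right)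
  qed
  have P: "\<forall>i. (\<Sum>a\<in>UNIV. w a * (f $ a) ^ i * (\<Prod>c\<in>C. f $ a - c) * (df $ a - E)) = 0"
    if "finite C" for C :: "real set"
    using that
  proof (induction C rule: finite_induct)
    case empty
    then show ?case using S by simp
  next
    case (insert c C)
    show ?case
    proof
      fix i
      have "(\<Sum>a\<in>UNIV. w a * (f $ a) ^ i * ((f $ a - c) * (\<lambda>x. \<Prod>c\<in>C. x - c) (f $ a)) * (df $ a - E)) = 0"
        by (rule step) (use insert.IH in simp)
      then show "(\<Sum>a\<in>UNIV. w a * (f $ a) ^ i * (\<Prod>c\<in>insert c C. f $ a - c) * (df $ a - E)) = 0"
        using insert.hyps by simp
    qed
  qed
  have "df $ b = E" for b
  proof -
    define C where "C = (\<lambda>a. f $ a) ` (UNIV - {b})"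
    have fC: "finite C" unfolding C_def by simp
    have z: "(\<Prod>c\<in>C. f $ a - c) = 0" if "a \<noteq> b" for a
      unfolding C_def using that by (intro prod_zero) auto
    have nz: "(\<Prod>c\<in>C. f $ b - c) \<noteq> 0"
      unfolding C_def using assms by (auto simp: inj_def)
    have "(\<Sum>a\<in>UNIV. w a * (f $ a) ^ 0 * (\<Prod>c\<in>C. f $ a - c) * (df $ a - E))
        = w b * (\<Prod>c\<in>C. f $ b - c) * (df $ b - E)"
      by (rule sum.remove[where x=b, THEN trans]) (auto simp: z intro!: sum.neutral)
    with P[OF fC] have "w b * (\<Prod>c\<in>C. f $ b - c) * (df $ b - E) = 0" by metis
    moreover have "w b > 0" unfolding w_def by (rule gw_pos)
    ultimately show ?thesis using nz by simp
  qed
  then show "\<exists>c::real. \<forall>a. df $ a = c" by blast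
qed

end
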